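(* Let $\mathcal{W}=\mathcal{W}^{(1)}+\cdots+\mathcal{W}^{(K)}$ be a decomposition of a tensor $\mathcal{W}\in\mathbb{R}^{n_1\times\cdots\times n_K}$, and let $\bar r_k=\mathrm{rank}(\boldsymbol{W}^{(k)}_{(k)})$. This decomposition is locally identifiable if and only if there exists $k^\ast$ such that $\mathcal{W}^{(k^\ast)}=\mathcal{W}$ and $\mathcal{W}^{(k)}=0$ for all $k\ne k^\ast$.
   Context: $N=\prod_k n_k$; for a tensor $\mathcal{W}^{(k)}$, $\boldsymbol{W}^{(k)}_{(k)}\in\mathbb{R}^{n_k\times N/n_k}$ is its mode-$k$ unfolding (columns are its mode-$k$ fibers). A decomposition $\mathcal{W}=\sum_{k=1}^K\mathcal{W}^{(k)}$ with $\bar r_k=\mathrm{rank}(\boldsymbol{W}^{(k)}_{(k)})$ is called locally identifiable if there is no other decomposition $\mathcal{W}=\sum_{k=1}^K\tilde{\mathcal{W}}^{(k)}$ (with $(\tilde{\mathcal{W}}^{(k)})_k\ne(\mathcal{W}^{(k)})_k$) having the same ranks, i.e. $\mathrm{rank}(\tilde{\boldsymbol{W}}^{(k)}_{(k)})=\bar r_k$ for all $k$. *)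

theory Defs
  imports "Jordan_Normal_Form.DL_Rank" "HOL-Library.List_Lexorder"
begin

text \<open>A real tensor of order K = length n with dimensions n!0, ..., n!(K-1) is represented
  as a function from index lists to reals that vanishes outside the valid index range.
  Modes are numbered 0..K-1.\<close>

definition tensor_idx :: "nat list \<Rightarrow> nat list set" where
  "tensor_idx n = {is. length is = length n \<and> (\<forall>l<length n. is ! l < n ! l)}"

definition tensor_on :: "nat list \<Rightarrow> (nat list \<Rightarrow> real) \<Rightarrow> bool" where
  "tensor_on n T \<longleftrightarrow> (\<forall>is. is \<notin> tensor_idx n \<longrightarrow> T is = 0)"

text \<open>Column indices of the mode-k unfolding: the multi-indices over all modes other
  than k (the k-th entry is set to the dummy value 0).\<close>
definition unf_cols :: "nat list \<Rightarrow> nat \<Rightarrow> nat list set" where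
  "unf_cols n k = {j. length j = length n \<and> j ! k = 0 \<and>
                      (\<forall>l<length n. l \<noteq> k \<longrightarrow> j ! l < n ! l)}"

definition fiber :: "nat list \<Rightarrow> nat \<Rightarrow> (nat list \<Rightarrow> real) \<Rightarrow> nat list \<Rightarrow> real vec" where
  "fiber n k T j = vec (n ! k) (\<lambda>i. T (j[k := i]))"

definition mode_unfolding :: "nat list \<Rightarrow> nat \<Rightarrow> (nat list \<Rightarrow> real) \<Rightarrow> real mat" where
  "mode_unfolding n k T = mat_of_cols (n ! k) (map (fiber n k T) (sorted_list_of_set (unf_cols n k)))"

definition mode_rank :: "nat list \<Rightarrow> nat \<Rightarrow> (nat list \<Rightarrow> real) \<Rightarrow> nat" where
  "mode_rank n k T = vec_space.rank (n ! k) (mode_unfolding n k T)"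

definition tsum :: "(nat list \<Rightarrow> real) list \<Rightarrow> nat list \<Rightarrow> real" where
  "tsum Ws = (\<lambda>is. \<Sum>k<length Ws. (Ws ! k) is)"

text \<open>A decomposition Ws (list of K tensors, component k for mode k) is locally identifiable
  if no other decomposition of the same tensor has the same mode ranks.\<close>
definition locally_identifiable :: "nat list \<Rightarrow> (nat list \<Rightarrow> real) list \<Rightarrow> bool" where
  "locally_identifiable n Ws \<longleftrightarrow>
     (\<forall>Vs. length Vs = length n \<and> (\<forall>k<length n. tensor_on n (Vs ! k)) \<and>
           tsum Vs = tsum Ws \<and>
           (\<forall>k<length n. mode_rank n k (Vs ! k) = mode_rank n k (Ws ! k))
           \<longrightarrow> Vs = Ws)"

end

theory Submission imports Defs begin

lemma (in vec_space) rank_mat_of_cols: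
  assumes "set cs \<subseteq> carrier_vec n"
  shows "rank (mat_of_cols n cs) = vectorspace.dim class_ring (span_vs (set cs))"
  unfolding rank_def using assms by simp

lemma (in vec_space) lin_indpt_single:
  assumes "v \<in> carrier_vec n" "v \<noteq> 0\<^sub>v n"
  shows "lin_indpt {v}"
proof (rule finite_lin_indpt2)
  fix a assume "lincomb a {v} = 0\<^sub>v n"
  hence "a v \<cdot>\<^sub>v v = 0\<^sub>v n" using assms unfolding lincomb_def by simp
  have "\<exists>i<n. v $ i \<noteq> 0"
  proof (rule ccontr)
    assume "\<not> (\<exists>i<n. v $ i \<noteq> 0)"
    hence "v = 0\<^sub>v n" using assms(1) by (intro eq_vecI) auto
    with assms(2) show False by simp
  qed
  then obtain i where i: "i < n" "v $ i \<noteq> 0" by blast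
  have "(a v \<cdot>\<^sub>v v) $ i = 0" using \<open>a v \<cdot>\<^sub>v v = 0\<^sub>v n\<close> i by simp
  hence "a v = 0" using i assms by simp
  thus "\<forall>w\<in>{v}. a w = 0" by simp
qed (use assms in auto)

lemma (in vec_space) rank_pos:
  assumes "set cs \<subseteq> carrier_vec n" "v \<in> set cs" "v \<noteq> 0\<^sub>v n"
  shows "rank (mat_of_cols n cs) \<ge> 1"
proof -
  have "mat_of_cols n cs \<in> carrier_mat n (length cs)" by simp
  moreover have "{v} \<subseteq> set (cols (mat_of_cols n cs))" using assms by simp
  moreover have "lin_indpt {v}" using assms by (intro lin_indpt_single) auto
  ultimately have "card {v} \<le> rank (mat_of_cols n cs)" by (rule rank_ge_card_indpt)
  thus ?thesis by simp
qed

lemma (in vec_space) span_modify: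
  assumes F: "\<And>c. c \<in> C \<Longrightarrow> F c \<in> carrier_vec n"
    and c0: "c0 \<in> C"
    and G: "\<And>c. c \<in> C \<Longrightarrow> G c = F c + w c \<cdot>\<^sub>v F c0"
    and nz: "1 + w c0 \<noteq> 0"
  shows "span (F ` C) = span (G ` C)"
proof -
  have FC: "F ` C \<subseteq> carrier_vec n" using F by blast
  have Gc: "G c \<in> carrier_vec n" if "c \<in> C" for c
    unfolding G[OF that] using F[OF that] F[OF c0] by simp
  have GC: "G ` C \<subseteq> carrier_vec n" using Gc by blast
  have "G ` C \<subseteq> span (F ` C)"
  proof
    fix x assume "x \<in> G ` C"
    then obtain c where c: "c \<in> C" "x = G c" by blast
    have 1: "F c \<in> span (F ` C)" using c(1) FC in_own_span by blast
    have "F c0 \<in> span (F ` C)" using c0 FC in_own_span by blast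
    hence 2: "w c \<cdot>\<^sub>v F c0 \<in> span (F ` C)"
      by (rule smult_in_span[OF FC])
    have "F c + w c \<cdot>\<^sub>v F c0 \<in> span (F ` C)" using span_add1[OF FC 1 2] by simp
    then show "x \<in> span (F ` C)" unfolding c(2) G[OF c(1)] .
  qed
  hence 1: "span (G ` C) \<subseteq> span (F ` C)" by (rule span_subsetI[OF FC])
  have G0: "G c0 = (1 + w c0) \<cdot>\<^sub>v F c0" unfolding G[OF c0]
    by (rule eq_vecI) (use F[OF c0] in \<open>auto simp: algebra_simps\<close>)
  have "(1 / (1 + w c0)) \<cdot>\<^sub>v G c0 = ((1 / (1 + w c0)) * (1 + w c0)) \<cdot>\<^sub>v F c0"
    unfolding G0 smult_smult_assoc ..
  also have "\<dots> = F c0" using nz by simp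
  finally have eq: "(1 / (1 + w c0)) \<cdot>\<^sub>v G c0 = F c0" .
  have "G c0 \<in> span (G ` C)" using c0 GC in_own_span by blast
  hence "(1 / (1 + w c0)) \<cdot>\<^sub>v G c0 \<in> span (G ` C)" by (rule smult_in_span[OF GC])
  hence F0: "F c0 \<in> span (G ` C)" unfolding eq .
  have "F ` C \<subseteq> span (G ` C)"
  proof
    fix x assume "x \<in> F ` C"
    then obtain c where c: "c \<in> C" "x = F c" by blast
    have 1: "G c \<in> span (G ` C)" using c(1) GC in_own_span by blast
    have 2: "(- w c) \<cdot>\<^sub>v F c0 \<in> span (G ` C)"
      by (rule smult_in_span[OF GC F0])
    have 3: "F c = G c + (- w c) \<cdot>\<^sub>v F c0" unfolding G[OF c(1)]
      by (rule eq_vecI) (use F[OF c(1)] F[OF c0] in auto)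
    have "G c + (- w c) \<cdot>\<^sub>v F c0 \<in> span (G ` C)" using span_add1[OF GC 1 2] by simp
    then show "x \<in> span (G ` C)" unfolding c(2) 3 .
  qed
  hence "span (F ` C) \<subseteq> span (G ` C)" by (rule span_subsetI[OF GC])
  with 1 show ?thesis by (rule subset_antisym[rotated])
qed

lemma (in vec_space) rank_modify:
  assumes F: "\<And>c. c \<in> set L \<Longrightarrow> F c \<in> carrier_vec n"
    and c0: "c0 \<in> set L"
    and G: "\<And>c. c \<in> set L \<Longrightarrow> G c = F c + w c \<cdot>\<^sub>v F c0"
    and nz: "1 + w c0 \<noteq> 0"
  shows "rank (mat_of_cols n (map G L)) = rank (mat_of_cols n (map F L))"
proof -
  have Gc: "G c \<in> carrier_vec n" if "c \<in> set L" for c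
    unfolding G[OF that] using F[OF that] F[OF c0] by simp
  have sp: "span (F ` set L) = span (G ` set L)" by (rule span_modify[of "set L" F c0 G w, OF F c0 G nz])
  have "rank (mat_of_cols n (map G L)) = vectorspace.dim class_ring (span_vs (set (map G L)))"
    by (rule rank_mat_of_cols) (use Gc in auto)
  also have "\<dots> = vectorspace.dim class_ring (span_vs (set (map F L)))"
    using sp by simp
  also have "\<dots> = rank (mat_of_cols n (map F L))"
    by (rule rank_mat_of_cols[symmetric]) (use F in auto)
  finally show ?thesis .
qed

lemma finite_unf_cols: "finite (unf_cols n k)"
proof -
  have "unf_cols n k \<subseteq> {xs. set xs \<subseteq> {..<Suc (sum_list n)} \<and> length xs = length n}"
  proof
    fix j assume j: "j \<in> unf_cols n k"
    have "set j \<subseteq> {..<Suc (sum_list n)}"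
    proof
      fix x assume "x \<in> set j"
      then obtain l where l: "l < length j" "x = j ! l" by (auto simp: in_set_conv_nth)
      show "x \<in> {..<Suc (sum_list n)}"
      proof (cases "l = k")
        case True thus ?thesis using j l by (simp add: unf_cols_def)
      next
        case False
        hence "j ! l < n ! l" using j l by (simp add: unf_cols_def)
        moreover have "n ! l \<le> sum_list n" using j l by (intro elem_le_sum_list) (simp add: unf_cols_def)
        ultimately show ?thesis using l by simp
      qed
    qed
    thus "j \<in> {xs. set xs \<subseteq> {..<Suc (sum_list n)} \<and> length xs = length n}"
      using j by (simp add: unf_cols_def)
  qed
  thus ?thesis by (rule finite_subset) (rule finite_lists_length_eq, simp)
qed

lemma fiber_carrier: "fiber n k T c \<in> carrier_vec (n ! k)"
  by (simp add: fiber_def)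

lemma fiber_index: "x < n ! k \<Longrightarrow> fiber n k T c $ x = T (c[k := x])"
  by (simp add: fiber_def)

lemma mode_rank_perturb:
  assumes c0: "c0 \<in> unf_cols n k"
    and G: "\<And>c. c \<in> unf_cols n k \<Longrightarrow> fiber n k T' c = fiber n k T c + w c \<cdot>\<^sub>v fiber n k T c0"
    and nz: "1 + w c0 \<noteq> 0"
  shows "mode_rank n k T' = mode_rank n k T"
proof -
  interpret vs: vec_space "TYPE(real)" "n ! k" .
  let ?L = "sorted_list_of_set (unf_cols n k)"
  have L: "set ?L = unf_cols n k" using finite_unf_cols by simp
  show ?thesis
    unfolding mode_rank_def mode_unfolding_def
    by (rule vs.rank_modify[of ?L "fiber n k T" c0 "fiber n k T'" w])
       (use L c0 G nz fiber_carrier in auto)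
qed

lemma mode_rank_zero: "mode_rank n k (\<lambda>_. 0) = 0"
proof -
  interpret vs: vec_space "TYPE(real)" "n ! k" .
  let ?L = "sorted_list_of_set (unf_cols n k)"
  have "mat_of_cols (n ! k) (map (fiber n k (\<lambda>_. 0)) ?L) = 0\<^sub>m (n ! k) (length ?L)"
    by (rule eq_matI) (auto simp: mat_of_cols_def fiber_def)
  thus ?thesis unfolding mode_rank_def mode_unfolding_def using vs.rank_0I by simp
qed

lemma mode_rank_zero_imp:
  assumes T: "tensor_on n T" and k: "k < length n" and r: "mode_rank n k T = 0"
  shows "T = (\<lambda>_. 0)"
proof (rule ccontr)
  assume "T \<noteq> (\<lambda>_. 0)"
  then obtain x where x: "T x \<noteq> 0" by fastforce
  hence xi: "x \<in> tensor_idx n" using T by (auto simp: tensor_on_def)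
  define c where "c = x[k := 0]"
  have c: "c \<in> unf_cols n k" using xi k by (auto simp: c_def unf_cols_def tensor_idx_def nth_list_update)
  have xk: "x ! k < n ! k" using xi k by (simp add: tensor_idx_def)
  have "fiber n k T c $ (x ! k) = T x" using xk by (simp add: fiber_index c_def)
  hence nz: "fiber n k T c \<noteq> 0\<^sub>v (n ! k)" using x xk by auto
  interpret vs: vec_space "TYPE(real)" "n ! k" .
  let ?L = "sorted_list_of_set (unf_cols n k)"
  have L: "set ?L = unf_cols n k" using finite_unf_cols by simp
  have "1 \<le> vs.rank (mat_of_cols (n ! k) (map (fiber n k T) ?L))"
    by (rule vs.rank_pos[OF _ _ nz]) (use L c fiber_carrier in auto)
  with r show False unfolding mode_rank_def mode_unfolding_def by simp
qed


lemma tsum_single: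
  assumes "ks < length Ws" and "\<forall>k<length Ws. k \<noteq> ks \<longrightarrow> Ws ! k = (\<lambda>_. 0)"
  shows "tsum Ws = Ws ! ks"
proof
  fix x
  have "tsum Ws x = (\<Sum>k<length Ws. if k = ks then (Ws ! ks) x else 0)"
    unfolding tsum_def using assms(2) by (intro sum.cong) auto
  also have "\<dots> = (Ws ! ks) x" using assms(1) by simp
  finally show "tsum Ws x = (Ws ! ks) x" .
qed

theorem theorem4:
  fixes n :: "nat list" and Ws :: "(nat list \<Rightarrow> real) list"
  assumes "length n \<ge> 1"
    and "length Ws = length n"
    and "\<forall>k<length n. tensor_on n (Ws ! k)"
  shows "locally_identifiable n Ws \<longleftrightarrow>
         (\<exists>ks<length n. Ws ! ks = tsum Ws \<and> (\<forall>k<length n. k \<noteq> ks \<longrightarrow> Ws ! k = (\<lambda>_. 0)))"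
  (is "?L \<longleftrightarrow> ?R")
proof
  assume LI: ?L
  show ?R
  proof (rule ccontr)
    assume nR: "\<not> ?R"
    have "\<exists>i<length n. Ws ! i \<noteq> (\<lambda>_. 0)"
    proof (rule ccontr)
      assume "\<not> ?thesis"
      hence all0: "\<forall>k<length n. Ws ! k = (\<lambda>_. 0)" by blast
      hence "tsum Ws = Ws ! 0" using assms(1,2) by (intro tsum_single) auto
      hence ?R using all0 assms(1) by (intro exI[of _ 0]) auto
      with nR show False ..
    qed
    then obtain i where i: "i < length n" "Ws ! i \<noteq> (\<lambda>_. 0)" by blast
    have "\<exists>j<length n. j \<noteq> i \<and> Ws ! j \<noteq> (\<lambda>_. 0)"
    proof (rule ccontr)
      assume "\<not> ?thesis"
      hence oth: "\<forall>k<length n. k \<noteq> i \<longrightarrow> Ws ! k = (\<lambda>_. 0)" by blast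
      hence "tsum Ws = Ws ! i" using assms(2) i by (intro tsum_single) auto
      hence ?R using oth i by (intro exI[of _ i]) auto
      with nR show False ..
    qed
    then obtain j where j: "j < length n" "j \<noteq> i" "Ws ! j \<noteq> (\<lambda>_. 0)" by blast
    obtain xi where xi: "(Ws ! i) xi \<noteq> 0" using i by fastforce
    obtain xj where xj: "(Ws ! j) xj \<noteq> 0" using j by fastforce
    have xiT: "xi \<in> tensor_idx n" using xi assms(3) i by (auto simp: tensor_on_def)
    have xjT: "xj \<in> tensor_idx n" using xj assms(3) j by (auto simp: tensor_on_def)
    define c0 where "c0 = xi[i := 0]"
    define d0 where "d0 = xj[j := 0]"
    define p where "p = (\<lambda>x. (Ws ! i) (c0[i := x]))"
    define q where "q = (\<lambda>y. (Ws ! j) (d0[j := y]))"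
    define X where "X = (\<lambda>is. if is \<in> tensor_idx n then p (is ! i) * q (is ! j) else 0)"
    define t :: real where "t = 1 / (1 + \<bar>q (c0 ! j)\<bar> + \<bar>p (d0 ! i)\<bar>)"
    have tpos: "t > 0" unfolding t_def by (simp add: add_pos_nonneg)
    have ta: "t * \<bar>q (c0 ! j)\<bar> < 1" unfolding t_def by (simp add: field_simps)
    have tb: "t * \<bar>p (d0 ! i)\<bar> < 1" unfolding t_def by (simp add: field_simps)
    have nz1: "1 + t * q (c0 ! j) \<noteq> 0"
    proof -
      have "\<bar>t * q (c0 ! j)\<bar> < 1" using ta tpos by (simp add: abs_mult)
      thus ?thesis by linarith
    qed
    have nz2: "1 + - (t * p (d0 ! i)) \<noteq> 0"
    proof -
      have "\<bar>t * p (d0 ! i)\<bar> < 1" using tb tpos by (simp add: abs_mult)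
      thus ?thesis by linarith
    qed
    have c0U: "c0 \<in> unf_cols n i" using xiT i
      by (auto simp: c0_def unf_cols_def tensor_idx_def nth_list_update)
    have d0U: "d0 \<in> unf_cols n j" using xjT j
      by (auto simp: d0_def unf_cols_def tensor_idx_def nth_list_update)
    define Vs where "Vs = Ws[i := (\<lambda>is. (Ws ! i) is + t * X is), j := (\<lambda>is. (Ws ! j) is - t * X is)]"
    have lenV: "length Vs = length n" using assms(2) by (simp add: Vs_def)
    have Vi: "Vs ! i = (\<lambda>is. (Ws ! i) is + t * X is)" using i j assms(2) by (simp add: Vs_def)
    have Vj: "Vs ! j = (\<lambda>is. (Ws ! j) is - t * X is)" using i j assms(2) by (simp add: Vs_def)
    have Vk: "Vs ! k = Ws ! k" if "k \<noteq> i" "k \<noteq> j" for k using that by (simp add: Vs_def)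
    have X0: "X is = 0" if "is \<notin> tensor_idx n" for "is" using that by (simp add: X_def)
    have tonV: "\<forall>k<length n. tensor_on n (Vs ! k)"
    proof (intro allI impI)
      fix k assume k: "k < length n"
      have W: "tensor_on n (Ws ! k)" using assms(3) k by blast
      show "tensor_on n (Vs ! k)"
      proof (cases "k = i")
        case True thus ?thesis using W X0 Vi by (simp add: tensor_on_def)
      next
        case False
        show ?thesis
        proof (cases "k = j")
          case True thus ?thesis using W X0 Vj by (simp add: tensor_on_def)
        next
          case False thus ?thesis using W Vk \<open>k \<noteq> i\<close> by simp
        qed
      qed
    qed
    have tsumV: "tsum Vs = tsum Ws"
    proof
      fix x
      have "tsum Vs x = (\<Sum>k<length n. (Ws ! k) x + ((if k = i then t * X x else 0) - (if k = j then t * X x else 0)))"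
        unfolding tsum_def lenV
      proof (intro sum.cong refl)
        fix k assume "k \<in> {..<length n}"
        show "(Vs ! k) x = (Ws ! k) x + ((if k = i then t * X x else 0) - (if k = j then t * X x else 0))"
          using Vi Vj Vk j(2) by (cases "k = i"; cases "k = j") auto
      qed
      also have "\<dots> = (\<Sum>k<length n. (Ws ! k) x) + ((\<Sum>k<length n. if k = i then t * X x else 0) - (\<Sum>k<length n. if k = j then t * X x else 0))"
        by (simp add: sum.distrib sum_subtractf)
      also have "\<dots> = tsum Ws x" using i j assms(2) by (simp add: tsum_def)
      finally show "tsum Vs x = tsum Ws x" .
    qed
    have Xc: "X (c[k := x]) = p (c[k := x] ! i) * q (c[k := x] ! j)"
      if "c \<in> unf_cols n k" "x < n ! k" "k < length n" for c k x
    proof -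
      have "c[k := x] \<in> tensor_idx n" using that
        by (auto simp: unf_cols_def tensor_idx_def nth_list_update)
      thus ?thesis by (simp add: X_def)
    qed
    have ri: "mode_rank n i (Vs ! i) = mode_rank n i (Ws ! i)"
    proof (rule mode_rank_perturb[of c0 n i "Vs ! i" "Ws ! i" "\<lambda>c. q (c ! j) * t", OF c0U _ nz1[unfolded mult.commute[of t]]])
      fix c assume c: "c \<in> unf_cols n i"
      have lc: "length c = length n" using c by (simp add: unf_cols_def)
      show "fiber n i (Vs ! i) c = fiber n i (Ws ! i) c + (q (c ! j) * t) \<cdot>\<^sub>v fiber n i (Ws ! i) c0"
      proof (rule eq_vecI)
        fix x assume "x < dim_vec (fiber n i (Ws ! i) c + (q (c ! j) * t) \<cdot>\<^sub>v fiber n i (Ws ! i) c0)"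
        hence x: "x < n ! i" by (simp add: fiber_def)
        show "fiber n i (Vs ! i) c $ x = (fiber n i (Ws ! i) c + (q (c ! j) * t) \<cdot>\<^sub>v fiber n i (Ws ! i) c0) $ x"
          using x Xc[OF c x i(1)] lc i j by (simp add: fiber_index Vi p_def fiber_def)
      qed (simp add: fiber_def)
    qed
    have rj: "mode_rank n j (Vs ! j) = mode_rank n j (Ws ! j)"
    proof (rule mode_rank_perturb[of d0 n j "Vs ! j" "Ws ! j" "\<lambda>c. - (t * p (c ! i))", OF d0U _ nz2])
      fix c assume c: "c \<in> unf_cols n j"
      have lc: "length c = length n" using c by (simp add: unf_cols_def)
      show "fiber n j (Vs ! j) c = fiber n j (Ws ! j) c + (- (t * p (c ! i))) \<cdot>\<^sub>v fiber n j (Ws ! j) d0"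
      proof (rule eq_vecI)
        fix x assume "x < dim_vec (fiber n j (Ws ! j) c + (- (t * p (c ! i))) \<cdot>\<^sub>v fiber n j (Ws ! j) d0)"
        hence x: "x < n ! j" by (simp add: fiber_def)
        show "fiber n j (Vs ! j) c $ x = (fiber n j (Ws ! j) c + (- (t * p (c ! i))) \<cdot>\<^sub>v fiber n j (Ws ! j) d0) $ x"
          using x Xc[OF c x j(1)] lc i j by (simp add: fiber_index Vj q_def fiber_def)
      qed (simp add: fiber_def)
    qed
    have ranks: "\<forall>k<length n. mode_rank n k (Vs ! k) = mode_rank n k (Ws ! k)"
    proof (intro allI impI)
      fix k assume "k < length n"
      show "mode_rank n k (Vs ! k) = mode_rank n k (Ws ! k)"
        using ri rj Vk[of k] by (cases "k = i"; cases "k = j") auto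
    qed
    have "Vs = Ws" using LI lenV tonV tsumV ranks unfolding locally_identifiable_def by blast
    define e where "e = xi[j := xj ! j]"
    have eT: "e \<in> tensor_idx n" using xiT xjT j
      by (auto simp: e_def tensor_idx_def nth_list_update)
    have lxi: "length xi = length n" "length xj = length n" using xiT xjT by (auto simp: tensor_idx_def)
    have "p (e ! i) = (Ws ! i) xi" using j i lxi by (simp add: p_def e_def c0_def)
    moreover have "q (e ! j) = (Ws ! j) xj" using j i lxi by (simp add: q_def e_def d0_def)
    ultimately have "X e \<noteq> 0" using eT xi xj by (simp add: X_def)
    hence "(Vs ! i) e \<noteq> (Ws ! i) e" using Vi tpos by simp
    with \<open>Vs = Ws\<close> show False by simp
  qed
next
  assume ?R
  then obtain ks where ks: "ks < length n" "Ws ! ks = tsum Ws"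
    and oth: "\<forall>k<length n. k \<noteq> ks \<longrightarrow> Ws ! k = (\<lambda>_. 0)" by blast
  show ?L
    unfolding locally_identifiable_def
  proof (intro allI impI)
    fix Vs assume H: "length Vs = length n \<and> (\<forall>k<length n. tensor_on n (Vs ! k)) \<and>
           tsum Vs = tsum Ws \<and> (\<forall>k<length n. mode_rank n k (Vs ! k) = mode_rank n k (Ws ! k))"
    have othV: "\<forall>k<length Vs. k \<noteq> ks \<longrightarrow> Vs ! k = (\<lambda>_. 0)"
    proof (intro allI impI)
      fix k assume k: "k < length Vs" "k \<noteq> ks"
      have "mode_rank n k (Vs ! k) = 0" using H k oth mode_rank_zero by simp
      moreover have "k < length n" using H k by simp
      moreover have "tensor_on n (Vs ! k)" using H \<open>k < length n\<close> by blast
      ultimately show "Vs ! k = (\<lambda>_. 0)" using mode_rank_zero_imp by blast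
    qed
    have "Vs ! ks = tsum Vs" using tsum_single[of ks Vs] othV ks H by simp
    hence Vks: "Vs ! ks = Ws ! ks" using H ks by simp
    show "Vs = Ws"
    proof (rule nth_equalityI)
      show "length Vs = length Ws" using H assms(2) by simp
      fix k assume "k < length Vs"
      thus "Vs ! k = Ws ! k" using Vks othV oth H by (cases "k = ks") auto
    qed
  qed
qed

end
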